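(* In the setting below, let $p,q\in X$ with $|S_p\cap S_q|=1$, $|S_p|=2$ and $|S_q|=n$, and let $r\in X$ with $S_r\ne S_p$, $S_r\ne S_q$ and $|S_r|\ge 2$. Then either $S_r\subseteq S_q\setminus S_p$ or $S_r=(S_p\setminus S_q)\cup(S_q\setminus S_p)$.
   Context: Setting: $E=\{e_0,\dots,e_n\}\subset\mathbb R^n$ is the vertex set of an $n$-simplex with $e_0+\cdots+e_n=0$, and $X\subset\mathbb R^n\setminus\{0\}$ is a finite set with $E\subseteq X$, no element of $X$ a positive multiple of another, such that every $n+1$ points of $X$ are in good position. (A finite set $A$ is in conical position if $0\notin\operatorname{conv}A$ and no point of $A$ lies in the positive hull—set of nonnegative linear combinations—of the other points; it is in good position otherwise.) For $p\in X$, the support $S_p$ is the minimal subset of $E$ whose positive hull contains $p$. *)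

theory Defs
  imports "HOL-Analysis.Analysis"
begin

definition pos_hull :: "'a::real_vector set \<Rightarrow> 'a set" where
  "pos_hull A = {y. \<exists>c. (\<forall>a\<in>A. 0 \<le> c a) \<and> y = (\<Sum>a\<in>A. c a *\<^sub>R a)}"

definition conical_position :: "'a::real_vector set \<Rightarrow> bool" where
  "conical_position A \<longleftrightarrow>
     0 \<notin> convex hull A \<and> (\<forall>a\<in>A. a \<notin> pos_hull (A - {a}))"

definition good_position :: "'a::real_vector set \<Rightarrow> bool" where
  "good_position A \<longleftrightarrow> \<not> conical_position A"

definition centered_simplex :: "'a::euclidean_space set \<Rightarrow> bool" where
  "centered_simplex E \<longleftrightarrow>
     finite E \<and> card E = DIM('a) + 1 \<and> \<not> affine_dependent E \<and> (\<Sum>e\<in>E. e) = 0"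

definition support :: "'a::real_vector set \<Rightarrow> 'a \<Rightarrow> 'a set" where
  "support E p = (THE S. S \<subseteq> E \<and> p \<in> pos_hull S \<and> (\<forall>T. T \<subset> S \<longrightarrow> p \<notin> pos_hull T))"

end

theory Submission
  imports Defs
begin


lemma simplex_dep:
  assumes cs: "centered_simplex E" and s: "(\<Sum>e\<in>E. u e *\<^sub>R e) = 0"
    and e1: "e1 \<in> E" and e2: "e2 \<in> E"
  shows "u e1 = u e2"
proof -
  have fin: "finite E" and ind: "\<not> affine_dependent E" and s0: "(\<Sum>e\<in>E. e) = 0"
    using cs by (auto simp: centered_simplex_def)
  have cne: "card E > 0" using e1 fin card_gt_0_iff by blast
  define m where "m = sum u E / card E"
  define v where "v e = u e - m" for e
  have "sum v E = sum u E - card E * m" by (simp add: v_def sum_subtractf)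
  hence sv: "sum v E = 0" using cne by (simp add: m_def)
  have "(\<Sum>e\<in>E. v e *\<^sub>R e) = (\<Sum>e\<in>E. u e *\<^sub>R e) - m *\<^sub>R (\<Sum>e\<in>E. e)"
    by (simp add: v_def scaleR_diff_left sum_subtractf scaleR_right.sum)
  hence "(\<Sum>e\<in>E. v e *\<^sub>R e) = 0" using s s0 by simp
  hence "\<forall>e\<in>E. v e = 0" using ind sv affine_dependent_explicit_finite[OF fin] by blast
  thus ?thesis using e1 e2 by (simp add: v_def)
qed

lemma simplex_rep:
  fixes E :: "'a::euclidean_space set"
  assumes cs: "centered_simplex E"
  shows "\<exists>l. (\<forall>e\<in>E. 0 \<le> l e) \<and> x = (\<Sum>e\<in>E. l e *\<^sub>R e)"
proof -
  have fin: "finite E" and ind: "\<not> affine_dependent E" and s0: "(\<Sum>e\<in>E. e) = 0"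
    and ce: "card E = DIM('a) + 1"
    using cs by (auto simp: centered_simplex_def)
  have "aff_dim E = DIM('a)" using aff_dim_affine_independent[OF ind] ce by simp
  hence "affine hull E = UNIV" using aff_dim_eq_full by blast
  then obtain u where u: "(\<Sum>e\<in>E. u e *\<^sub>R e) = x" using affine_hull_finite[OF fin] by blast
  define M where "M = (\<Sum>e\<in>E. \<bar>u e\<bar>)"
  have "\<forall>e\<in>E. \<bar>u e\<bar> \<le> M" unfolding M_def using fin by (intro ballI member_le_sum) auto
  hence nn: "\<forall>e\<in>E. 0 \<le> u e + M" by force
  have "(\<Sum>e\<in>E. (u e + M) *\<^sub>R e) = (\<Sum>e\<in>E. u e *\<^sub>R e) + M *\<^sub>R (\<Sum>e\<in>E. e)"
    by (simp add: scaleR_add_left sum.distrib scaleR_right.sum)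
  hence "x = (\<Sum>e\<in>E. (u e + M) *\<^sub>R e)" using u s0 by simp
  show ?thesis by (rule exI[of _ "\<lambda>e. u e + M"]) (use nn \<open>x = _\<close> in simp)
qed

lemma rep_diff:
  assumes cs: "centered_simplex E" and S: "S \<subseteq> E"
    and x1: "x = (\<Sum>a\<in>S. c a *\<^sub>R a)" and x2: "x = (\<Sum>e\<in>E. m e *\<^sub>R e)"
    and e1: "e1 \<in> E" and e2: "e2 \<in> E"
  shows "(if e1 \<in> S then c e1 else 0) - m e1 = (if e2 \<in> S then c e2 else 0) - m e2"
proof -
  have fin: "finite E" using cs by (simp add: centered_simplex_def)
  have "(\<Sum>e\<in>E. (if e \<in> S then c e else 0) *\<^sub>R e) = (\<Sum>e\<in>E. if e \<in> S then c e *\<^sub>R e else 0)"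
    by (rule sum.cong) auto
  also have "\<dots> = (\<Sum>e\<in>E \<inter> S. c e *\<^sub>R e)" by (rule sum.inter_restrict[OF fin, symmetric])
  also have "E \<inter> S = S" using S by blast
  finally have a: "(\<Sum>e\<in>E. (if e \<in> S then c e else 0) *\<^sub>R e) = x" using x1 by simp
  have "(\<Sum>e\<in>E. ((if e \<in> S then c e else 0) - m e) *\<^sub>R e) = 0"
    using a x2 by (simp add: scaleR_diff_left sum_subtractf)
  from simplex_dep[OF cs this e1 e2] show ?thesis .
qed

lemma support_char:
  fixes E :: "'a::euclidean_space set"
  assumes cs: "centered_simplex E" and x: "x = (\<Sum>e\<in>E. l e *\<^sub>R e)" and nn: "\<forall>e\<in>E. 0 \<le> l e"
  shows "\<exists>m. (\<forall>e\<in>E. 0 \<le> m e) \<and> x = (\<Sum>e\<in>E. m e *\<^sub>R e) \<and> (\<exists>e\<in>E. m e = 0)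
           \<and> support E x = {e\<in>E. 0 < m e}"
proof -
  have fin: "finite E" and s0: "(\<Sum>e\<in>E. e) = 0" and ce: "card E = DIM('a) + 1"
    using cs by (auto simp: centered_simplex_def)
  have ne: "E \<noteq> {}" using ce by auto
  define mn where "mn = Min (l ` E)"
  define m where "m e = l e - mn" for e
  have mle: "\<forall>e\<in>E. mn \<le> l e" unfolding mn_def using fin by auto
  have m0: "\<forall>e\<in>E. 0 \<le> m e" using mle by (simp add: m_def)
  have "mn \<in> l ` E" unfolding mn_def using fin ne by simp
  then obtain es where es: "es \<in> E" "l es = mn" by auto
  have mes: "m es = 0" using es by (simp add: m_def)
  have "(\<Sum>e\<in>E. m e *\<^sub>R e) = (\<Sum>e\<in>E. l e *\<^sub>R e) - mn *\<^sub>R (\<Sum>e\<in>E. e)"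
    by (simp add: m_def scaleR_diff_left sum_subtractf scaleR_right.sum)
  hence xm: "x = (\<Sum>e\<in>E. m e *\<^sub>R e)" using x s0 by simp
  define S0 where "S0 = {e\<in>E. 0 < m e}"
  have S0E: "S0 \<subseteq> E" by (auto simp: S0_def)
  have esS0: "es \<notin> S0" using mes by (simp add: S0_def)
  have inS0: "x \<in> pos_hull S0"
  proof -
    have "(\<Sum>e\<in>E. m e *\<^sub>R e) = (\<Sum>e\<in>S0. m e *\<^sub>R e)"
      by (rule sum.mono_neutral_right[OF fin S0E]) (use m0 in \<open>auto simp: S0_def\<close>)
    thus ?thesis unfolding pos_hull_def using xm m0 S0E by blast
  qed
  have min0: "x \<notin> pos_hull T" if T: "T \<subset> S0" for T
  proof
    assume "x \<in> pos_hull T"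
    then obtain c where c: "x = (\<Sum>a\<in>T. c a *\<^sub>R a)" unfolding pos_hull_def by blast
    obtain e' where e': "e' \<in> S0" "e' \<notin> T" using T by blast
    have TE: "T \<subseteq> E" using T S0E by blast
    have "(if e' \<in> T then c e' else 0) - m e' = (if es \<in> T then c es else 0) - m es"
      by (rule rep_diff[OF cs TE c xm]) (use e' S0E es in auto)
    moreover have "es \<notin> T" using T esS0 by blast
    ultimately show False using e' mes by (simp add: S0_def)
  qed
  have P0: "S0 \<subseteq> E \<and> x \<in> pos_hull S0 \<and> (\<forall>T. T \<subset> S0 \<longrightarrow> x \<notin> pos_hull T)"
    using S0E inS0 min0 by blast
  have uniq: "S = S0" if P: "S \<subseteq> E \<and> x \<in> pos_hull S \<and> (\<forall>T. T \<subset> S \<longrightarrow> x \<notin> pos_hull T)" for S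
  proof -
    from P obtain c where c: "\<forall>a\<in>S. 0 \<le> c a" "x = (\<Sum>a\<in>S. c a *\<^sub>R a)" unfolding pos_hull_def by blast
    have SE: "S \<subseteq> E" using P by blast
    define t where "t = (if es \<in> S then c es else 0)"
    have t0: "0 \<le> t" using c by (simp add: t_def)
    have eq: "(if e \<in> S then c e else 0) = m e + t" if "e \<in> E" for e
      using rep_diff[OF cs SE c(2) xm that es(1)] mes by (simp add: t_def)
    show ?thesis
    proof (cases "t = 0")
      case True
      have "S0 \<subseteq> S"
      proof
        fix e assume "e \<in> S0"
        hence "e \<in> E" "0 < m e" by (auto simp: S0_def)
        thus "e \<in> S" using eq[of e] True by (auto split: if_splits)
      qed
      moreover have "\<not> S0 \<subset> S" using P inS0 by blast
      ultimately show ?thesis by blast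
    next
      case False
      hence tp: "0 < t" using t0 by simp
      have "E \<subseteq> S"
      proof
        fix e assume e: "e \<in> E"
        show "e \<in> S" using eq[OF e] m0 e tp by (auto split: if_splits)
      qed
      hence "S0 \<subset> S" using SE S0E esS0 es by blast
      thus ?thesis using P inS0 by blast
    qed
  qed
  have "support E x = S0" unfolding support_def
    by (rule the_equality) (use P0 uniq in blast)+
  thus ?thesis using m0 xm es mes by (auto simp: S0_def)
qed



lemma dep_conical:
  fixes A :: "'a::real_vector set"
  assumes good: "good_position A" and fin: "finite A"
    and dep: "\<And>c. (\<Sum>a\<in>A. c a *\<^sub>R a) = 0 \<Longrightarrow> \<exists>s. \<forall>a\<in>A. c a = s * g a"
    and a: "a1 \<in> A" "a2 \<in> A" "a3 \<in> A" "a4 \<in> A" "a1 \<noteq> a2" "a3 \<noteq> a4"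
    and sg: "g a1 > 0" "g a2 > 0" "g a3 < 0" "g a4 < 0"
  shows False
proof -
  have "0 \<in> convex hull A \<or> (\<exists>a\<in>A. a \<in> pos_hull (A - {a}))"
    using good by (auto simp: good_position_def conical_position_def)
  thus False
  proof
    assume "0 \<in> convex hull A"
    then obtain u where u: "\<forall>x\<in>A. 0 \<le> u x" "sum u A = 1" "(\<Sum>x\<in>A. u x *\<^sub>R x) = 0"
      using convex_hull_finite[OF fin] by auto
    obtain s where s: "\<forall>a\<in>A. u a = s * g a" using dep[OF u(3)] by blast
    show False
    proof (cases "s > 0")
      case True
      hence "u a3 < 0" using s a sg by (simp add: mult_pos_neg)
      thus False using u a by force
    next
      case False
      show False
      proof (cases "s < 0")
        case True
        hence "u a1 < 0" using s a sg by (simp add: mult_neg_pos)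
        thus False using u a by force
      next
        case False
        hence "s = 0" using \<open>\<not> s > 0\<close> by simp
        hence "sum u A = 0" using s by simp
        thus False using u by simp
      qed
    qed
  next
    assume "\<exists>a\<in>A. a \<in> pos_hull (A - {a})"
    then obtain a c where aA: "a \<in> A" and c: "\<forall>b\<in>A - {a}. 0 \<le> c b" "a = (\<Sum>b\<in>A - {a}. c b *\<^sub>R b)"
      unfolding pos_hull_def by blast
    define d where "d b = (if b = a then -1 else c b)" for b
    have "(\<Sum>b\<in>A. d b *\<^sub>R b) = d a *\<^sub>R a + (\<Sum>b\<in>A - {a}. d b *\<^sub>R b)"
      by (rule sum.remove[OF fin aA])
    also have "(\<Sum>b\<in>A - {a}. d b *\<^sub>R b) = (\<Sum>b\<in>A - {a}. c b *\<^sub>R b)"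
      by (rule sum.cong) (auto simp: d_def)
    finally have "(\<Sum>b\<in>A. d b *\<^sub>R b) = 0" using c by (simp add: d_def)
    then obtain s where s: "\<forall>b\<in>A. d b = s * g b" using dep by blast
    have "s * g a = -1" using s[rule_format, OF aA] by (simp add: d_def)
    hence sn: "s \<noteq> 0" by auto
    show False
    proof (cases "s > 0")
      case True
      obtain a' where a': "a' \<in> A" "a' \<noteq> a" "g a' < 0" using a sg by metis
      have "d a' = c a'" using a' by (simp add: d_def)
      moreover have "0 \<le> c a'" using c a' by blast
      moreover have "s * g a' < 0" using True a' by (simp add: mult_pos_neg)
      ultimately show False using s a' by force
    next
      case False
      hence sneg: "s < 0" using sn by simp
      obtain a' where a': "a' \<in> A" "a' \<noteq> a" "g a' > 0" using a sg by metis
      have "d a' = c a'" using a' by (simp add: d_def)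
      moreover have "0 \<le> c a'" using c a' by blast
      moreover have "s * g a' < 0" using sneg a' by (simp add: mult_neg_pos)
      ultimately show False using s a' by force
    qed
  qed
qed

lemma single_conical:
  fixes E X :: "'a::euclidean_space set"
  assumes cs: "centered_simplex E" and gp: "\<forall>A\<subseteq>X. card A = DIM('a) + 1 \<longrightarrow> good_position A"
    and EX: "E \<subseteq> X" and xX: "x \<in> X" and xE: "x \<notin> E"
    and xl: "x = (\<Sum>g\<in>E. l g *\<^sub>R g)" and e: "e \<in> E"
    and f1: "f1 \<in> E" "l f1 < l e"
    and g: "g1 \<in> E" "g2 \<in> E" "g1 \<noteq> g2" "l e < l g1" "l e < l g2"
  shows False
proof -
  have fin: "finite E" and ce: "card E = DIM('a) + 1" using cs by (auto simp: centered_simplex_def)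
  define A where "A = insert x (E - {e})"
  have finA: "finite A" using fin by (simp add: A_def)
  have "card A = DIM('a) + 1" using xE fin e ce by (simp add: A_def card_Diff_singleton)
  moreover have "A \<subseteq> X" using EX xX by (auto simp: A_def)
  ultimately have good: "good_position A" using gp by blast
  define gam where "gam z = (if z = x then 1 else l e - l z)" for z
  have dep: "\<exists>s. \<forall>a\<in>A. c a = s * gam a" if c0: "(\<Sum>a\<in>A. c a *\<^sub>R a) = 0" for c
  proof -
    define c' where "c' g = c x * l g + (if g \<in> E - {e} then c g else 0)" for g
    have xn: "x \<notin> E - {e}" using xE by blast
    have s1: "(\<Sum>a\<in>A. c a *\<^sub>R a) = c x *\<^sub>R x + (\<Sum>g\<in>E - {e}. c g *\<^sub>R g)"
      unfolding A_def using fin xn by (simp add: sum.insert)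
    have s2: "(\<Sum>g\<in>E. (if g \<in> E - {e} then c g else 0) *\<^sub>R g) = (\<Sum>g\<in>E - {e}. c g *\<^sub>R g)"
    proof -
      have "(\<Sum>g\<in>E. (if g \<in> E - {e} then c g else 0) *\<^sub>R g) = (\<Sum>g\<in>E. if g \<in> E - {e} then c g *\<^sub>R g else 0)"
        by (rule sum.cong) auto
      also have "\<dots> = (\<Sum>g\<in>E \<inter> (E - {e}). c g *\<^sub>R g)" by (rule sum.inter_restrict[OF fin, symmetric])
      also have "E \<inter> (E - {e}) = E - {e}" by blast
      finally show ?thesis .
    qed
    have "(\<Sum>g\<in>E. c' g *\<^sub>R g) = c x *\<^sub>R (\<Sum>g\<in>E. l g *\<^sub>R g) + (\<Sum>g\<in>E. (if g \<in> E - {e} then c g else 0) *\<^sub>R g)"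
      by (simp add: c'_def scaleR_add_left sum.distrib scaleR_right.sum)
    also have "\<dots> = 0" using s1 s2 c0 xl by simp
    finally have z: "(\<Sum>g\<in>E. c' g *\<^sub>R g) = 0" .
    have "\<forall>a\<in>A. c a = c x * gam a"
    proof
      fix a assume "a \<in> A"
      show "c a = c x * gam a"
      proof (cases "a = x")
        case True thus ?thesis by (simp add: gam_def)
      next
        case False
        hence aE: "a \<in> E" "a \<noteq> e" using \<open>a \<in> A\<close> by (auto simp: A_def)
        have "c' a = c' e" using simplex_dep[OF cs z aE(1) e] .
        hence "c x * l a + c a = c x * l e" using aE by (simp add: c'_def)
        thus ?thesis using False by (simp add: gam_def algebra_simps)
      qed
    qed
    thus ?thesis by blast
  qed
  have mem: "x \<in> A" "f1 \<in> A" "g1 \<in> A" "g2 \<in> A" using f1 g e by (auto simp: A_def)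
  have ne: "x \<noteq> f1" using xE f1 by blast
  show False
    by (rule dep_conical[OF good finA dep mem ne g(3)]) (use f1 g xE in \<open>auto simp: gam_def\<close>)
qed



definition pgam :: "'a \<Rightarrow> 'a \<Rightarrow> ('a \<Rightarrow> real) \<Rightarrow> ('a \<Rightarrow> real) \<Rightarrow> 'a \<Rightarrow> 'a \<Rightarrow> 'a \<Rightarrow> real" where
  "pgam x y lx ly e f z = (if z = x then ly e - ly f else if z = y then -(lx e - lx f)
     else (lx f * ly e - lx e * ly f) - (ly e - ly f) * lx z + (lx e - lx f) * ly z)"

lemma pair_conical:
  fixes E X :: "'a::euclidean_space set"
  assumes cs: "centered_simplex E" and gp: "\<forall>A\<subseteq>X. card A = DIM('a) + 1 \<longrightarrow> good_position A"
    and EX: "E \<subseteq> X" and xX: "x \<in> X" and xE: "x \<notin> E" and yX: "y \<in> X" and yE: "y \<notin> E"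
    and xy: "x \<noteq> y"
    and xl: "x = (\<Sum>g\<in>E. lx g *\<^sub>R g)" and yl: "y = (\<Sum>g\<in>E. ly g *\<^sub>R g)"
    and e: "e \<in> E" and f: "f \<in> E" and ef: "e \<noteq> f"
    and a: "a1 \<in> insert x (insert y (E - {e, f}))" "a2 \<in> insert x (insert y (E - {e, f}))"
           "a3 \<in> insert x (insert y (E - {e, f}))" "a4 \<in> insert x (insert y (E - {e, f}))"
           "a1 \<noteq> a2" "a3 \<noteq> a4"
    and sg: "pgam x y lx ly e f a1 > 0" "pgam x y lx ly e f a2 > 0"
            "pgam x y lx ly e f a3 < 0" "pgam x y lx ly e f a4 < 0"
  shows False
proof -
  have fin: "finite E" and ce: "card E = DIM('a) + 1" using cs by (auto simp: centered_simplex_def)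
  define A where "A = insert x (insert y (E - {e, f}))"
  have finA: "finite A" using fin by (simp add: A_def)
  have cEef: "card (E - {e, f}) = card E - 2" using e f ef fin by (simp add: card_Diff_subset)
  have "card A = DIM('a) + 1" using xE yE xy fin cEef ce by (simp add: A_def)
  moreover have "A \<subseteq> X" using EX xX yX by (auto simp: A_def)
  ultimately have good: "good_position A" using gp by blast
  define dx where "dx = lx e - lx f"
  define dy where "dy = ly e - ly f"
  define ka where "ka = lx f * ly e - lx e * ly f"
  define gam where "gam = pgam x y lx ly e f"
  have gx: "gam x = dy" and gy: "gam y = - dx" using xy by (simp_all add: gam_def pgam_def dx_def dy_def)
  have gg: "gam g = ka - dy * lx g + dx * ly g" if "g \<in> E" for g
    using that xE yE by (auto simp: gam_def pgam_def dx_def dy_def ka_def)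
  have dnz: "dx \<noteq> 0 \<or> dy \<noteq> 0"
  proof (rule ccontr)
    assume "\<not> (dx \<noteq> 0 \<or> dy \<noteq> 0)"
    hence d0: "dx = 0" "dy = 0" by auto
    hence "ka = 0" by (simp add: ka_def dx_def dy_def algebra_simps)
    hence "gam a1 = 0" using a(1) gx gy gg d0 by (auto simp: A_def)
    thus False using sg(1) by (simp add: gam_def)
  qed
  have dep: "\<exists>s. \<forall>a\<in>A. c a = s * gam a" if c0: "(\<Sum>a\<in>A. c a *\<^sub>R a) = 0" for c
  proof -
    define c' where "c' g = c x * lx g + c y * ly g + (if g \<in> E - {e, f} then c g else 0)" for g
    have xn: "x \<notin> insert y (E - {e, f})" using xE xy by blast
    have yn: "y \<notin> E - {e, f}" using yE by blast
    have s1: "(\<Sum>a\<in>A. c a *\<^sub>R a) = c x *\<^sub>R x + (c y *\<^sub>R y + (\<Sum>g\<in>E - {e, f}. c g *\<^sub>R g))"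
      unfolding A_def using fin xn yn by (simp add: sum.insert)
    have s2: "(\<Sum>g\<in>E. (if g \<in> E - {e, f} then c g else 0) *\<^sub>R g) = (\<Sum>g\<in>E - {e, f}. c g *\<^sub>R g)"
    proof -
      have "(\<Sum>g\<in>E. (if g \<in> E - {e, f} then c g else 0) *\<^sub>R g) = (\<Sum>g\<in>E. if g \<in> E - {e, f} then c g *\<^sub>R g else 0)"
        by (rule sum.cong) auto
      also have "\<dots> = (\<Sum>g\<in>E \<inter> (E - {e, f}). c g *\<^sub>R g)" by (rule sum.inter_restrict[OF fin, symmetric])
      also have "E \<inter> (E - {e, f}) = E - {e, f}" by blast
      finally show ?thesis .
    qed
    have "(\<Sum>g\<in>E. c' g *\<^sub>R g) = c x *\<^sub>R (\<Sum>g\<in>E. lx g *\<^sub>R g) + c y *\<^sub>R (\<Sum>g\<in>E. ly g *\<^sub>R g)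
        + (\<Sum>g\<in>E. (if g \<in> E - {e, f} then c g else 0) *\<^sub>R g)"
      by (simp add: c'_def scaleR_add_left sum.distrib scaleR_right.sum)
    also have "\<dots> = 0" using s1 s2 c0 xl yl by (simp add: add.assoc)
    finally have z: "(\<Sum>g\<in>E. c' g *\<^sub>R g) = 0" .
    have ce': "c' g = c' e" if "g \<in> E" for g using simplex_dep[OF cs z that e] .
    have "c' f = c' e" using ce'[OF f] .
    hence lin: "c x * dx + c y * dy = 0" using ef by (simp add: c'_def dx_def dy_def algebra_simps)
    define s where "s = (if dy \<noteq> 0 then c x / dy else - c y / dx)"
    have cxy: "c x = s * dy \<and> c y = - s * dx"
    proof (cases "dy = 0")
      case True
      hence "dx \<noteq> 0" using dnz by simp
      thus ?thesis using True lin by (simp add: s_def)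
    next
      case False
      have "c y * dy = - (c x * dx)" using lin by simp
      hence "c y = - (c x * dx) / dy" using False by (simp add: field_simps)
      thus ?thesis using False by (simp add: s_def field_simps)
    qed
    have cx: "c x = s * dy" and cy: "c y = - s * dx" using cxy by auto
    have "\<forall>a\<in>A. c a = s * gam a"
    proof
      fix a assume aA: "a \<in> A"
      show "c a = s * gam a"
      proof (cases "a = x")
        case True thus ?thesis using cx gx by simp
      next
        case F1: False
        show ?thesis
        proof (cases "a = y")
          case True thus ?thesis using cy gy by simp
        next
          case False
          hence aE: "a \<in> E" "a \<noteq> e" "a \<noteq> f" using aA F1 by (auto simp: A_def)
          have "c' a = c' e" using ce'[OF aE(1)] .
          hence "c x * lx a + c y * ly a + c a = c x * lx e + c y * ly e" using aE ef by (simp add: c'_def)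
          hence "c a = c x * lx e + c y * ly e - c x * lx a - c y * ly a" by simp
          also have "\<dots> = s * (ka - dy * lx a + dx * ly a)"
            unfolding cx cy by (simp add: ka_def dx_def dy_def algebra_simps)
          finally show ?thesis using gg[OF aE(1)] by simp
        qed
      qed
    qed
    thus ?thesis by blast
  qed
  show False
    by (rule dep_conical[OF good finA dep, of a1 a2 a3 a4]) (use a sg in \<open>simp_all add: A_def gam_def\<close>)
qed



lemma coords:
  fixes E :: "'a::euclidean_space set"
  assumes cs: "centered_simplex E"
  shows "\<exists>m. (\<forall>e\<in>E. 0 \<le> m e) \<and> x = (\<Sum>e\<in>E. m e *\<^sub>R e) \<and> (\<exists>e\<in>E. m e = 0)
           \<and> support E x = {e\<in>E. 0 < m e}"
proof -
  obtain l where l: "\<forall>e\<in>E. 0 \<le> l e" "x = (\<Sum>e\<in>E. l e *\<^sub>R e)" using simplex_rep[OF cs, of x] by (elim exE conjE)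
  show ?thesis by (rule support_char[OF cs l(2) l(1)])
qed

lemma not_in_E:
  fixes E :: "'a::euclidean_space set"
  assumes cs: "centered_simplex E" and x: "x = (\<Sum>e\<in>E. m e *\<^sub>R e)" and z: "ez \<in> E" "m ez = 0"
    and c2: "card {e\<in>E. 0 < m e} \<ge> 2"
  shows "x \<notin> E"
proof
  assume xE: "x \<in> E"
  have fin: "finite E" using cs by (simp add: centered_simplex_def)
  define ind where "ind g = (if g = x then 1 else (0::real))" for g
  have "(\<Sum>e\<in>E. ind e *\<^sub>R e) = (\<Sum>e\<in>E. if e = x then e else 0)"
    by (rule sum.cong) (auto simp: ind_def)
  also have "\<dots> = x" using fin xE by (simp add: sum.delta)
  finally have xi: "(\<Sum>e\<in>E. ind e *\<^sub>R e) = x" .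
  have eq: "m g - ind g = m ez - ind ez" if "g \<in> E" for g
  proof -
    have "(\<Sum>e\<in>E. (m e - ind e) *\<^sub>R e) = (\<Sum>e\<in>E. m e *\<^sub>R e) - (\<Sum>e\<in>E. ind e *\<^sub>R e)"
      by (simp add: scaleR_diff_left sum_subtractf)
    also have "\<dots> = 0" unfolding xi x[symmetric] by simp
    finally have "(\<Sum>e\<in>E. (m e - ind e) *\<^sub>R e) = 0" .
    from simplex_dep[OF cs this that z(1)] show ?thesis .
  qed
  have "{e\<in>E. 0 < m e} \<subseteq> {x}"
  proof
    fix g assume g: "g \<in> {e\<in>E. 0 < m e}"
    show "g \<in> {x}"
    proof (rule ccontr)
      assume "g \<notin> {x}"
      hence "m g = m ez - ind ez" using eq[of g] g by (simp add: ind_def)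
      thus False using z g by (auto simp: ind_def split: if_splits)
    qed
  qed
  hence "card {e\<in>E. 0 < m e} \<le> card {x}" by (intro card_mono) auto
  hence "card {e\<in>E. 0 < m e} \<le> 1" by simp
  thus False using c2 by simp
qed

theorem proposition6p10:
  fixes E X :: "'a::euclidean_space set" and p q r :: 'a
  assumes "centered_simplex E"
    and "finite X" and "0 \<notin> X" and "E \<subseteq> X"
    and "\<forall>x\<in>X. \<forall>y\<in>X. \<forall>c::real. c > 0 \<and> y = c *\<^sub>R x \<longrightarrow> y = x"
    and "\<forall>A\<subseteq>X. card A = DIM('a) + 1 \<longrightarrow> good_position A"
    and "p \<in> X" and "q \<in> X"
    and "card (support E p \<inter> support E q) = 1"
    and "card (support E p) = 2" and "card (support E q) = DIM('a)"
    and "r \<in> X" and "support E r \<noteq> support E p" and "support E r \<noteq> support E q"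
    and "card (support E r) \<ge> 2"
  shows "support E r \<subseteq> support E q - support E p \<or>
         support E r = (support E p - support E q) \<union> (support E q - support E p)"
proof -
  note cs = assms(1) and EX = assms(4) and gp = assms(6) and pX = assms(7) and qX = assms(8)
    and rX = assms(12)
  have fin: "finite E" and ce: "card E = DIM('a) + 1" using cs by (auto simp: centered_simplex_def)
  obtain lp where lp: "\<forall>e\<in>E. 0 \<le> lp e" "p = (\<Sum>e\<in>E. lp e *\<^sub>R e)" "\<exists>e\<in>E. lp e = 0"
     "support E p = {e\<in>E. 0 < lp e}" using coords[OF cs, of p] by (elim exE conjE)
  obtain lq where lq: "\<forall>e\<in>E. 0 \<le> lq e" "q = (\<Sum>e\<in>E. lq e *\<^sub>R e)" "\<exists>e\<in>E. lq e = 0"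
     "support E q = {e\<in>E. 0 < lq e}" using coords[OF cs, of q] by (elim exE conjE)
  obtain lr where lr: "\<forall>e\<in>E. 0 \<le> lr e" "r = (\<Sum>e\<in>E. lr e *\<^sub>R e)" "\<exists>e\<in>E. lr e = 0"
     "support E r = {e\<in>E. 0 < lr e}" using coords[OF cs, of r] by (elim exE conjE)
  define Sp where "Sp = {e\<in>E. 0 < lp e}"
  define Sq where "Sq = {e\<in>E. 0 < lq e}"
  define Sr where "Sr = {e\<in>E. 0 < lr e}"
  have cSp: "card Sp = 2" and cSq: "card Sq = DIM('a)" and cSr: "card Sr \<ge> 2"
    and cSpq: "card (Sp \<inter> Sq) = 1" and rp: "Sr \<noteq> Sp" and rq: "Sr \<noteq> Sq"
    using assms(9,10,11,13,14,15) lp(4) lq(4) lr(4) by (simp_all add: Sp_def Sq_def Sr_def)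
  have SqE: "Sq \<subseteq> E" and SpE: "Sp \<subseteq> E" and SrE: "Sr \<subseteq> E" by (auto simp: Sp_def Sq_def Sr_def)
  have "card (E - Sq) = 1" using cSq ce SqE fin by (simp add: card_Diff_subset finite_subset)
  then obtain c where c: "E - Sq = {c}" by (rule card_1_singletonE)
  have "c \<in> E - Sq" using c by blast
  hence cE: "c \<in> E" and lqc: "lq c = 0" using lq(1) by (auto simp: Sq_def)
  have SqEq: "Sq = E - {c}" using c SqE by blast
  have lqpos: "0 < lq g" if "g \<in> E" "g \<noteq> c" for g
  proof -
    have "g \<in> Sq" using SqEq that by blast
    thus ?thesis by (simp add: Sq_def)
  qed
  have cSp: "c \<in> Sp"
  proof (rule ccontr)
    assume "c \<notin> Sp"
    hence "Sp \<subseteq> Sq" using SpE SqEq by blast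
    hence "Sp \<inter> Sq = Sp" by blast
    thus False using cSpq cSp by simp
  qed
  have "card (Sp - {c}) = 1" using cSp \<open>card Sp = 2\<close> by simp
  then obtain b where b: "Sp - {c} = {b}" by (rule card_1_singletonE)
  have bE: "b \<in> E" and bc: "b \<noteq> c" and lpb: "0 < lp b" using b by (auto simp: Sp_def)
  have lpc: "0 < lp c" using cSp by (simp add: Sp_def)
  have lp0: "lp g = 0" if "g \<in> E" "g \<noteq> b" "g \<noteq> c" for g
    using b that lp(1) by (force simp: Sp_def)
  have lqb: "0 < lq b" using lqpos bE bc by blast
  have pE: "p \<notin> E" using not_in_E[OF cs lp(2)] lp(3) \<open>card Sp = 2\<close> by (auto simp: Sp_def)
  have "DIM('a) \<ge> 2"
  proof -
    obtain z where "z \<in> E" "lp z = 0" using lp(3) by blast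
    hence "z \<notin> Sp" by (simp add: Sp_def)
    hence "Sp \<subset> E" using SpE \<open>z \<in> E\<close> by blast
    hence "card Sp < card E" using fin psubset_card_mono by blast
    thus ?thesis using ce \<open>card Sp = 2\<close> by simp
  qed
  hence qE: "q \<notin> E" using not_in_E[OF cs lq(2)] lq(3) cSq by (auto simp: Sq_def)
  have rE: "r \<notin> E" using not_in_E[OF cs lr(2)] lr(3) cSr by (auto simp: Sr_def)
  have pq: "p \<noteq> q"
  proof
    assume "p = q"
    hence "Sp = Sq" using lp(4) lq(4) by (simp add: Sp_def Sq_def)
    thus False using cSp SqEq by blast
  qed
  have pr: "p \<noteq> r" using assms(13) by auto
  have qr: "q \<noteq> r" using assms(14) by auto
  have PR: False if u: "u \<in> {b, c}" and v: "v \<in> {b, c}" "v \<noteq> u" and lru: "0 < lr u" and lrv: "lr v = 0"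
     and g0: "g0 \<in> E" "g0 \<noteq> b" "g0 \<noteq> c" "lr g0 = 0"
     and g1: "g1 \<in> E" "g1 \<noteq> b" "g1 \<noteq> c" "0 < lr g1" for u v g0 g1
  proof -
    have uE: "u \<in> E" and vE: "v \<in> E" using u v bE cE by auto
    have lpu: "0 < lp u" and lpv: "0 < lp v" using u v lpb lpc by auto
    have g01: "g0 \<noteq> g1" using g0 g1 by auto
    have lpg0: "lp g0 = 0" and lpg1: "lp g1 = 0" using lp0 g0 g1 by auto
    have ne: "g1 \<noteq> p" "g1 \<noteq> r" "v \<noteq> p" "v \<noteq> r" using g1 vE pE rE by auto
    have s1: "pgam p r lp lr u g0 p > 0" using lru g0 by (simp add: pgam_def)
    have s2: "pgam p r lp lr u g0 g1 > 0"
      using ne lru lpu g1 lpg0 lpg1 g0 by (simp add: pgam_def)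
    have s3: "pgam p r lp lr u g0 r < 0" using lpu lpg0 pr by (simp add: pgam_def)
    have s4: "pgam p r lp lr u g0 v < 0"
      using ne lru lpv lrv lpg0 g0 by (simp add: pgam_def mult_pos_pos)
    show False
      by (rule pair_conical[OF cs gp EX pX pE rX rE pr lp(2) lr(2) uE g0(1), of g1 p r v])
         (use g0 g1 u v vE s1 s2 s3 s4 pE rE ne in auto)
  qed

  have SpEq: "Sp = {b, c}" using b cSp by blast
  have lrb: "lr b = 0"
  proof (rule ccontr)
    assume "lr b \<noteq> 0"
    hence lrb: "0 < lr b" using lr(1) bE by force
    show False
    proof (cases "lr c = 0")
      case True
      have "c \<notin> Sr" using True by (simp add: Sr_def)
      hence sub: "Sr \<subseteq> E - {c}" using SrE by blast
      have "\<not> E - {c} \<subseteq> Sr"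
      proof
        assume "E - {c} \<subseteq> Sr"
        hence "Sr = Sq" using sub SqEq by (simp add: subset_antisym)
        thus False using rq by simp
      qed
      then obtain g0 where g0: "g0 \<in> E" "g0 \<noteq> c" "g0 \<notin> Sr" by (auto simp: subset_iff)
      have lrg0: "lr g0 = 0" using g0 lr(1) by (force simp: Sr_def)
      have "\<not> Sr \<subseteq> {b}"
      proof
        assume "Sr \<subseteq> {b}"
        hence "card Sr \<le> card {b}" by (intro card_mono) auto
        thus False using cSr by simp
      qed
      then obtain g1 where g1: "g1 \<in> Sr" "g1 \<noteq> b" by blast
      have g1': "g1 \<in> E" "g1 \<noteq> c" "0 < lr g1" using g1 True by (auto simp: Sr_def)
      show False
        by (rule PR[of b c g0 g1]) (use True lrb g0 lrg0 g1 g1' bc lrg0 in auto)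
    next
      case False
      hence lrc: "0 < lr c" using lr(1) cE by force
      obtain g0 where g0: "g0 \<in> E" "lr g0 = 0" using lr(3) by blast
      have g0bc: "g0 \<noteq> b" "g0 \<noteq> c" using g0 lrb lrc by auto
      have sub: "{b, c} \<subseteq> Sr" using lrb lrc bE cE by (auto simp: Sr_def)
      have "\<not> Sr \<subseteq> {b, c}"
      proof
        assume "Sr \<subseteq> {b, c}"
        hence "Sr = Sp" using sub SpEq by (simp add: subset_antisym)
        thus False using rp by simp
      qed
      then obtain g1 where g1: "g1 \<in> Sr" "g1 \<noteq> b" "g1 \<noteq> c" by (auto simp: subset_iff)
      have g1E: "g1 \<in> E" and lrg1: "0 < lr g1" using g1 by (auto simp: Sr_def)
      have lqg0: "0 < lq g0" and lqg1: "0 < lq g1" using lqpos g0 g0bc g1E g1 by auto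
      have g01: "g0 \<noteq> g1" using g0 lrg1 by auto
      have lpg0: "lp g0 = 0" and lpg1: "lp g1 = 0" using lp0 g0 g0bc g1E g1 by auto
      have ne: "g0 \<noteq> p" "g0 \<noteq> q" "g0 \<noteq> r" "g1 \<noteq> p" "g1 \<noteq> q" "g1 \<noteq> r" "b \<noteq> p" "b \<noteq> q" "b \<noteq> r"
        using g0 g1E bE pE qE rE by auto
      show False
      proof (cases "lq b < lq g0 \<and> lq b < lq g1")
        case True
        show False
          by (rule single_conical[OF cs gp EX qX qE lq(2) bE cE, of g0 g1])
             (use True lqc lqb g0 g1E g01 in auto)
      next
        case F2: False
        show False
        proof (cases "lq g1 < lq g0")
          case True
          hence bg1: "lq g1 \<le> lq b" using F2 by auto
          have s1: "pgam p q lp lq g1 c p > 0" using lqg1 lqc by (simp add: pgam_def)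
          have s2: "pgam p q lp lq g1 c q > 0" using lpc lpg1 pq by (simp add: pgam_def)
          have e3: "pgam p q lp lq g1 c g0 = lp c * (lq g1 - lq g0)"
            using ne lqc lpg1 lpg0 by (simp add: pgam_def algebra_simps)
          have s3: "pgam p q lp lq g1 c g0 < 0" unfolding e3 using lpc True by (simp add: mult_pos_neg)
          have e4: "pgam p q lp lq g1 c b = lp c * (lq g1 - lq b) - lq g1 * lp b"
            using ne lqc lpg1 by (simp add: pgam_def algebra_simps)
          have "lp c * (lq g1 - lq b) \<le> 0" using lpc bg1 by (simp add: mult_nonneg_nonpos)
          moreover have "lq g1 * lp b > 0" using lqg1 lpb by simp
          ultimately have s4: "pgam p q lp lq g1 c b < 0" unfolding e4 by linarith
          show False
            by (rule pair_conical[OF cs gp EX pX pE qX qE pq lp(2) lq(2) g1E cE, of p q g0 b])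
               (use g1 g0bc g0 g01 s1 s2 s3 s4 ne bE bc pq in auto)
        next
          case False
          hence h1: "lq g0 \<le> lq g1" by simp
          hence h2: "lq g0 \<le> lq b" using F2 by auto
          have s1: "pgam q r lq lr c g0 q > 0" using lrc g0 by (simp add: pgam_def)
          have s2: "pgam q r lq lr c g0 r > 0" using lqg0 lqc qr by (simp add: pgam_def)
          have e3: "pgam q r lq lr c g0 b = lr c * (lq g0 - lq b) - lq g0 * lr b"
            using ne lqc g0 by (simp add: pgam_def algebra_simps)
          have "lr c * (lq g0 - lq b) \<le> 0" using lrc h2 by (simp add: mult_nonneg_nonpos)
          moreover have "lq g0 * lr b > 0" using lqg0 lrb by simp
          ultimately have s3: "pgam q r lq lr c g0 b < 0" unfolding e3 by linarith
          have e4: "pgam q r lq lr c g0 g1 = lr c * (lq g0 - lq g1) - lq g0 * lr g1"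
            using ne lqc g0 by (simp add: pgam_def algebra_simps)
          have "lr c * (lq g0 - lq g1) \<le> 0" using lrc h1 by (simp add: mult_nonneg_nonpos)
          moreover have "lq g0 * lr g1 > 0" using lqg0 lrg1 by simp
          ultimately have s4: "pgam q r lq lr c g0 g1 < 0" unfolding e4 by linarith
          show False
            by (rule pair_conical[OF cs gp EX qX qE rX rE qr lq(2) lr(2) cE g0(1), of q r b g1])
               (use g1 g1E g0bc g0 g01 s1 s2 s3 s4 ne bc bE qr in auto)
        qed
      qed
    qed
  qed
  have goal: "Sr \<subseteq> Sq - Sp \<or> Sr = (Sp - Sq) \<union> (Sq - Sp)"
  proof (cases "lr c = 0")
    case True
    have "Sr \<subseteq> Sq - Sp"
    proof
      fix g assume g: "g \<in> Sr"
      hence "g \<in> E" "g \<noteq> b" "g \<noteq> c" using lrb True by (auto simp: Sr_def)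
      thus "g \<in> Sq - Sp" using SqEq SpEq by auto
    qed
    thus ?thesis by blast
  next
    case False
    hence lrc: "0 < lr c" using lr(1) cE by force
    have "\<not> Sr \<subseteq> {c}"
    proof
      assume "Sr \<subseteq> {c}"
      hence "card Sr \<le> card {c}" by (intro card_mono) auto
      thus False using cSr by simp
    qed
    then obtain g1 where g1: "g1 \<in> Sr" "g1 \<noteq> c" by blast
    have g1': "g1 \<in> E" "g1 \<noteq> b" "0 < lr g1" using g1 lrb by (auto simp: Sr_def)
    have allpos: "0 < lr g" if "g \<in> E" "g \<noteq> b" "g \<noteq> c" for g
    proof (rule ccontr)
      assume "\<not> 0 < lr g"
      hence "lr g = 0" using lr(1) that by force
      show False by (rule PR[of c b g g1]) (use \<open>lr g = 0\<close> that g1 g1' lrc lrb bc in auto)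
    qed
    have "Sr = (Sp - Sq) \<union> (Sq - Sp)"
    proof
      show "Sr \<subseteq> (Sp - Sq) \<union> (Sq - Sp)"
      proof
        fix g assume "g \<in> Sr"
        hence "g \<in> E" "g \<noteq> b" using lrb by (auto simp: Sr_def)
        thus "g \<in> (Sp - Sq) \<union> (Sq - Sp)" using SqEq SpEq by auto
      qed
      show "(Sp - Sq) \<union> (Sq - Sp) \<subseteq> Sr"
      proof
        fix g assume "g \<in> (Sp - Sq) \<union> (Sq - Sp)"
        hence "g \<in> E" "g \<noteq> b" using SqEq SpEq bE cE bc by auto
        thus "g \<in> Sr" using allpos lrc by (cases "g = c") (auto simp: Sr_def)
      qed
    qed
    thus ?thesis by blast
  qed
  have sp: "support E p = Sp" using lp(4) by (simp add: Sp_def)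
  have sq: "support E q = Sq" using lq(4) by (simp add: Sq_def)
  have sr: "support E r = Sr" using lr(4) by (simp add: Sr_def)
  show ?thesis unfolding sp sq sr by (rule goal)
qed


end
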